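(* Let $n\ge 3$ and let $CH_n$ be the closed Helm graph. Then $$\chi'(CH_n)=\begin{cases}3(n+1) & \text{if } n \text{ is even},\\ 3n+7 & \text{if } n \text{ is odd}.\end{cases}$$
   Context: The closed Helm graph $CH_n$ has vertices $v, v_1,\dots,v_n,u_1,\dots,u_n$; $v_1\dots v_n$ form a cycle, $u_1\dots u_n$ form a cycle (in this order), $v$ is adjacent to every $v_i$, and $u_i$ is adjacent to $v_i$ for each $i$ (i.e. the Helm graph with its pendant vertices joined into an outer cycle). For a proper colouring $c:V(G)\to\{1,\dots,k\}$ (colour $c_i$ identified with $i$), the colouring sum is $\sum_{i=1}^k i\,\theta(c_i)=\sum_v c(v)$, $\theta(c_i)$ the number of vertices of colour $c_i$. The $\chi$-chromatic sum $\chi'(G)$ is the minimum colouring sum over all proper colourings $c:V(G)\to\{1,\dots,\chi(G)\}$, $\chi(G)$ the chromatic number. *)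

theory Defs
  imports Main
begin

definition proper_colouring :: "'a set \<Rightarrow> ('a \<Rightarrow> 'a \<Rightarrow> bool) \<Rightarrow> nat \<Rightarrow> ('a \<Rightarrow> nat) \<Rightarrow> bool" where
  "proper_colouring V E k c \<longleftrightarrow>
     (\<forall>x\<in>V. c x \<in> {1..k}) \<and> (\<forall>x\<in>V. \<forall>y\<in>V. E x y \<longrightarrow> c x \<noteq> c y)"

definition chromatic_number :: "'a set \<Rightarrow> ('a \<Rightarrow> 'a \<Rightarrow> bool) \<Rightarrow> nat" where
  "chromatic_number V E = (LEAST k. \<exists>c. proper_colouring V E k c)"

definition chi_chromatic_sum :: "'a set \<Rightarrow> ('a \<Rightarrow> 'a \<Rightarrow> bool) \<Rightarrow> nat" where
  "chi_chromatic_sum V E =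
     (LEAST s. \<exists>c. proper_colouring V E (chromatic_number V E) c \<and> s = (\<Sum>x\<in>V. c x))"

text \<open>Closed Helm graph CH_n: hub, inner cycle V 0..V (n-1), outer cycle U 0..U (n-1).\<close>
datatype chvert = Hub | V nat | U nat

definition CH_verts :: "nat \<Rightarrow> chvert set" where
  "CH_verts n = {Hub} \<union> V ` {..<n} \<union> U ` {..<n}"

definition CH_adj :: "nat \<Rightarrow> chvert \<Rightarrow> chvert \<Rightarrow> bool" where
  "CH_adj n x y \<longleftrightarrow> x \<noteq> y \<and>
     (\<exists>i<n. {x, y} = {Hub, V i} \<or> {x, y} = {V i, V ((i + 1) mod n)}
           \<or> {x, y} = {U i, U ((i + 1) mod n)} \<or> {x, y} = {V i, U i})"

end

theory Submission
  imports Defs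
begin

lemma CH_mem: "Hub \<in> CH_verts n" "i < n \<Longrightarrow> V i \<in> CH_verts n" "i < n \<Longrightarrow> U i \<in> CH_verts n"
  by (auto simp: CH_verts_def)

lemma suc_mod_ne: assumes "3 \<le> n" "i < n" shows "Suc i mod n \<noteq> i"
proof (cases "Suc i < n")
  case True then show ?thesis by simp
next
  case False then have "Suc i = n" using assms by simp
  then show ?thesis using assms by simp
qed

lemma CH_adjs:
  assumes "3 \<le> n" "i < n"
  shows "CH_adj n Hub (V i)" "CH_adj n (V i) (V (Suc i mod n))"
        "CH_adj n (U i) (U (Suc i mod n))" "CH_adj n (V i) (U i)"
  using assms suc_mod_ne[OF assms] unfolding CH_adj_def by auto

lemma adj_cases:
  "CH_adj n x y \<Longrightarrow> \<exists>i<n. (x=Hub \<and> y=V i) \<or> (x=V i \<and> y=Hub) \<or> (x=V i \<and> y=V (Suc i mod n))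
     \<or> (x=V (Suc i mod n) \<and> y=V i) \<or> (x=U i \<and> y=U (Suc i mod n)) \<or> (x=U (Suc i mod n) \<and> y=U i)
     \<or> (x=V i \<and> y=U i) \<or> (x=U i \<and> y=V i)"
  unfolding CH_adj_def by (auto simp: doubleton_eq_iff)

lemma proper_intro:
  assumes "\<forall>x\<in>CH_verts n. c x \<in> {1..k}"
    "\<forall>i<n. c Hub \<noteq> c (V i)" "\<forall>i<n. c (V i) \<noteq> c (V (Suc i mod n))"
    "\<forall>i<n. c (U i) \<noteq> c (U (Suc i mod n))" "\<forall>i<n. c (V i) \<noteq> c (U i)"
  shows "proper_colouring (CH_verts n) (CH_adj n) k c"
  unfolding proper_colouring_def
proof (intro conjI ballI impI)
  fix x assume "x \<in> CH_verts n" then show "c x \<in> {1..k}" using assms(1) by blast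
next
  fix x y assume "CH_adj n x y"
  from adj_cases[OF this] obtain i where "i < n" and "(x=Hub \<and> y=V i) \<or> (x=V i \<and> y=Hub) \<or> (x=V i \<and> y=V (Suc i mod n))
     \<or> (x=V (Suc i mod n) \<and> y=V i) \<or> (x=U i \<and> y=U (Suc i mod n)) \<or> (x=U (Suc i mod n) \<and> y=U i)
     \<or> (x=V i \<and> y=U i) \<or> (x=U i \<and> y=V i)" by (elim exE conjE) (rule that)
  moreover note a = assms(2-5)[rule_format, OF \<open>i < n\<close>]
  ultimately show "c x \<noteq> c y"
    by (elim disjE conjE) (simp_all add: a a[THEN not_sym])
qed

lemma sum_CH: "sum c (CH_verts n) = c Hub + (\<Sum>i<n. c (V i)) + (\<Sum>i<n. c (U i))"
proof -
  have e: "CH_verts n = insert Hub (V ` {..<n} \<union> U ` {..<n})" by (auto simp: CH_verts_def)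
  have "sum c (V ` {..<n} \<union> U ` {..<n}) = sum c (V ` {..<n}) + sum c (U ` {..<n})"
    by (rule sum.union_disjoint) auto
  also have "sum c (V ` {..<n}) = (\<Sum>i<n. c (V i))"
    by (subst sum.reindex) (auto simp: inj_on_def)
  also have "sum c (U ` {..<n}) = (\<Sum>i<n. c (U i))"
    by (subst sum.reindex) (auto simp: inj_on_def)
  finally show ?thesis unfolding e by (subst sum.insert) (auto simp: add.assoc)
qed

lemma pair_sum:
  assumes "0 < n"
  shows "(\<Sum>i<n. f i + f (Suc i mod n)) = 2 * (\<Sum>i<n. (f i::nat))"
proof -
  obtain m where n: "n = Suc m" using assms by (cases n) auto
  have "(\<Sum>i<n. f (Suc i mod n)) = (\<Sum>i<m. f (Suc i mod n)) + f 0"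
    by (simp add: n)
  also have "(\<Sum>i<m. f (Suc i mod n)) = (\<Sum>i<m. f (Suc i))"
    by (rule sum.cong) (auto simp: n)
  also have "(\<Sum>i<m. f (Suc i)) + f 0 = (\<Sum>i<n. f i)"
    unfolding n sum.lessThan_Suc_shift by simp
  finally show ?thesis by (simp add: sum.distrib)
qed

lemma cyc_lb0:
  assumes "0 < n" "\<forall>i<n. p \<le> f i + f (Suc i mod n)"
  shows "p * n \<le> 2 * (\<Sum>i<n. (f i::nat))"
proof -
  have "card {..<n} * p \<le> (\<Sum>i<n. f i + f (Suc i mod n))"
    using sum_bounded_below[of "{..<n}" p "\<lambda>i. f i + f (Suc i mod n)"] assms(2) by simp
  then show ?thesis using pair_sum[OF assms(1), of f] by (simp add: mult.commute)
qed

lemma cyc_lb2: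
  assumes "2 \<le> n" "\<forall>i<n. p \<le> f i + f (Suc i mod n)" "j < n"
    "p + e \<le> f j + f (Suc j mod n)" "p + e \<le> f (if j = 0 then n - 1 else j - 1) + f j"
  shows "p * n + 2 * e \<le> 2 * (\<Sum>i<n. (f i::nat))"
proof -
  define j' where "j' = (if j = 0 then n - 1 else j - 1)"
  have j': "j' < n" "j' \<noteq> j" "Suc j' mod n = j" using assms(1,3) by (auto simp: j'_def)
  define P where "P i = f i + f (Suc i mod n)" for i
  have "(\<Sum>i<n. P i) = P j + (\<Sum>i\<in>{..<n} - {j}. P i)"
    using assms(3) by (simp add: sum.remove)
  also have "(\<Sum>i\<in>{..<n} - {j}. P i) = P j' + (\<Sum>i\<in>{..<n} - {j} - {j'}. P i)"
    using j' by (subst sum.remove[of _ j']) auto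
  finally have s: "(\<Sum>i<n. P i) = P j + P j' + (\<Sum>i\<in>{..<n} - {j} - {j'}. P i)" by simp
  have c: "card ({..<n} - {j} - {j'}) = n - 2" using j' assms(3) by simp
  have "card ({..<n} - {j} - {j'}) * p \<le> (\<Sum>i\<in>{..<n} - {j} - {j'}. P i)"
    using sum_bounded_below[of "{..<n} - {j} - {j'}" p P] assms(2) by (simp add: P_def)
  then have r: "(n - 2) * p \<le> (\<Sum>i\<in>{..<n} - {j} - {j'}. P i)" using c by simp
  have pj: "p + e \<le> P j" "p + e \<le> P j'" using assms(4,5) j' by (auto simp: P_def j'_def)
  obtain m where m: "n = m + 2" using assms(1) by (metis add.commute le_Suc_ex)
  have "p * n + 2 * e \<le> (\<Sum>i<n. P i)" using s r pj m by (simp add: algebra_simps)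
  then show ?thesis using pair_sum[of n f] assms(1) by (simp add: P_def)
qed

lemma two_val: "x \<noteq> y \<Longrightarrow> x = a \<or> x = b \<Longrightarrow> y = a \<or> y = b \<Longrightarrow> z = a \<or> z = b \<Longrightarrow> (x = z) = (y \<noteq> z)"
  by auto

lemma odd_cycle_two:
  assumes "odd n" "3 \<le> n" "\<forall>i<n. f i \<noteq> f (Suc i mod n)" "\<forall>i<n. f i = a \<or> f i = b"
  shows False
proof -
  have key: "i < n \<Longrightarrow> (f i = f 0) = even i" for i
  proof (induction i)
    case 0 then show ?case by simp
  next
    case (Suc i)
    have il: "i < n" using Suc.prems by simp
    have "Suc i mod n = Suc i" using Suc.prems by simp
    then have ne: "f (Suc i) \<noteq> f i" using assms(3) il by metis
    have ab: "f (Suc i) = a \<or> f (Suc i) = b" "f i = a \<or> f i = b" "f 0 = a \<or> f 0 = b"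
      using assms(4) Suc.prems by auto
    have ih: "(f i = f 0) = even i" using Suc.IH il by blast
    have "(f (Suc i) = f 0) = (f i \<noteq> f 0)" using two_val[OF ne ab] .
    then show ?case using ih by simp
  qed
  have l: "n - 1 < n" using assms by simp
  have "even (n - 1)" using assms by simp
  then have e: "f (n - 1) = f 0" using key[OF l] by simp
  have "Suc (n - 1) mod n = 0" using assms by simp
  then have "f (n - 1) \<noteq> f 0" using assms(3) l by metis
  then show False using e by simp
qed

lemma proper_facts:
  assumes "proper_colouring (CH_verts n) (CH_adj n) k c" "3 \<le> n"
  shows "c Hub \<in> {1..k}" "\<forall>i<n. c (V i) \<in> {1..k}" "\<forall>i<n. c (U i) \<in> {1..k}"
    "\<forall>i<n. c Hub \<noteq> c (V i)" "\<forall>i<n. c (V i) \<noteq> c (V (Suc i mod n))"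
    "\<forall>i<n. c (U i) \<noteq> c (U (Suc i mod n))" "\<forall>i<n. c (V i) \<noteq> c (U i)"
proof -
  have col: "\<And>x. x \<in> CH_verts n \<Longrightarrow> c x \<in> {1..k}" and
    ad: "\<And>x y. x \<in> CH_verts n \<Longrightarrow> y \<in> CH_verts n \<Longrightarrow> CH_adj n x y \<Longrightarrow> c x \<noteq> c y"
    using assms(1) unfolding proper_colouring_def by blast+
  have sm: "i < n \<Longrightarrow> Suc i mod n < n" for i by simp
  show "c Hub \<in> {1..k}" by (rule col, rule CH_mem)
  show "\<forall>i<n. c (V i) \<in> {1..k}" "\<forall>i<n. c (U i) \<in> {1..k}"
    by (intro allI impI col CH_mem, assumption)+
  show "\<forall>i<n. c Hub \<noteq> c (V i)"
    by (intro allI impI ad CH_mem CH_adjs assms(2))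
  show "\<forall>i<n. c (V i) \<noteq> c (V (Suc i mod n))"
    by (intro allI impI ad CH_mem CH_adjs assms(2) sm)
  show "\<forall>i<n. c (U i) \<noteq> c (U (Suc i mod n))"
    by (intro allI impI ad CH_mem CH_adjs assms(2) sm)
  show "\<forall>i<n. c (V i) \<noteq> c (U i)"
    by (intro allI impI ad CH_mem CH_adjs assms(2))
qed

lemma alt_sum: "(\<Sum>i<2*k. (if even i then a else b)) = k * (a + (b::nat))"
  by (induction k) (auto simp: mult_2)

lemma tri_lb:
  assumes "proper_colouring (CH_verts n) (CH_adj n) k c" "3 \<le> n"
  shows "3 \<le> k"
proof -
  note f = proper_facts[OF assms]
  have "c Hub \<noteq> c (V 0)" "c Hub \<noteq> c (V 1)" "c (V 0) \<noteq> c (V 1)"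
    "c Hub \<in> {1..k}" "c (V 0) \<in> {1..k}" "c (V 1) \<in> {1..k}"
    using f assms(2) by (auto dest: spec[of _ 0] spec[of _ 1])
  then show ?thesis by auto
qed

lemma odd_lb:
  assumes "proper_colouring (CH_verts n) (CH_adj n) k c" "3 \<le> n" "odd n"
  shows "4 \<le> k"
proof (rule ccontr)
  assume "\<not> 4 \<le> k"
  note f = proper_facts[OF assms(1,2)]
  obtain a b where ab: "\<forall>x. 1 \<le> x \<and> x \<le> 3 \<and> x \<noteq> c Hub \<longrightarrow> x = a \<or> x = b"
  proof -
    have "c Hub = 1 \<or> c Hub = 2 \<or> c Hub = 3" using f(1) \<open>\<not> 4 \<le> k\<close> by auto
    then show ?thesis
    proof (elim disjE)
      assume h: "c Hub = 1" show ?thesis by (rule that[of 2 3]) (use h in auto)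
    next
      assume h: "c Hub = 2" show ?thesis by (rule that[of 1 3]) (use h in auto)
    next
      assume h: "c Hub = 3" show ?thesis by (rule that[of 1 2]) (use h in auto)
    qed
  qed
  have "\<forall>i<n. c (V i) = a \<or> c (V i) = b"
  proof (intro allI impI)
    fix i assume "i < n"
    then have "c (V i) \<in> {1..k}" "c Hub \<noteq> c (V i)" using f(2,4) by auto
    then show "c (V i) = a \<or> c (V i) = b" using ab \<open>\<not> 4 \<le> k\<close> by auto
  qed
  then show False using odd_cycle_two[of n "\<lambda>i. c (V i)" a b] f(5) assms by blast
qed

definition colE :: "nat \<Rightarrow> chvert \<Rightarrow> nat" where
  "colE n x = (case x of Hub \<Rightarrow> 3 | V i \<Rightarrow> (if even i then 1 else 2) | U i \<Rightarrow> (if even i then 2 else 1))"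

definition colO :: "nat \<Rightarrow> chvert \<Rightarrow> nat" where
  "colO n x = (case x of Hub \<Rightarrow> 4 | V i \<Rightarrow> (if i = n - 1 then 3 else if even i then 1 else 2)
      | U i \<Rightarrow> (if i = 0 then 3 else if even i then 2 else 1))"

lemma suc_mod_cases: "i < n \<Longrightarrow> Suc i mod n = (if Suc i = n then 0 else Suc i)"
  by auto

lemma colE_proper:
  assumes "3 \<le> n" "even n"
  shows "proper_colouring (CH_verts n) (CH_adj n) 3 (colE n)"
  by (rule proper_intro) (use assms in \<open>auto simp: colE_def CH_verts_def suc_mod_cases\<close>)

lemma colO_proper:
  assumes "3 \<le> n" "odd n"
  shows "proper_colouring (CH_verts n) (CH_adj n) 4 (colO n)"
  by (rule proper_intro) (use assms in \<open>auto simp: colO_def CH_verts_def suc_mod_cases\<close>)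

lemma colE_sum:
  assumes "even n"
  shows "sum (colE n) (CH_verts n) = 3 * (n + 1)"
proof -
  obtain k where n: "n = 2 * k" using assms by blast
  have "(\<Sum>i<n. (if even i then 2 else 1)) = k * (2 + (1::nat))" unfolding n by (rule alt_sum)
  moreover have "(\<Sum>i<n. (if even i then 1 else 2)) = k * (1 + (2::nat))" unfolding n by (rule alt_sum)
  ultimately show ?thesis unfolding sum_CH by (simp add: colE_def n)
qed

lemma colO_sum:
  assumes "odd n"
  shows "sum (colO n) (CH_verts n) = 3 * n + 7"
proof -
  obtain k where n: "n = Suc (2 * k)" using assms by (metis oddE Suc_eq_plus1)
  have "(\<Sum>i<n. colO n (V i)) = (\<Sum>i<2*k. colO n (V i)) + 3"
    by (simp add: n colO_def)
  also have "(\<Sum>i<2*k. colO n (V i)) = (\<Sum>i<2*k. (if even i then 1 else 2))"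
    by (rule sum.cong) (auto simp: colO_def n)
  also have "\<dots> = k * (1 + 2)" by (rule alt_sum)
  finally have sv: "(\<Sum>i<n. colO n (V i)) = 3 * k + 3" by simp
  have "(\<Sum>i<n. colO n (U i)) = 3 + (\<Sum>i<2*k. colO n (U (Suc i)))"
    unfolding n sum.lessThan_Suc_shift by (simp add: colO_def)
  also have "(\<Sum>i<2*k. colO n (U (Suc i))) = (\<Sum>i<2*k. (if even i then 1 else 2))"
    by (rule sum.cong) (auto simp: colO_def n)
  also have "\<dots> = k * (1 + 2)" by (rule alt_sum)
  finally have su: "(\<Sum>i<n. colO n (U i)) = 3 * k + 3" by simp
  show ?thesis unfolding sum_CH sv su by (simp add: colO_def n)
qed


lemma pred_pair: "j < n \<Longrightarrow> 2 \<le> n \<Longrightarrow> Suc (if j = 0 then n - 1 else j - 1) mod n = j"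
  by auto

lemma lb_even:
  assumes "proper_colouring (CH_verts n) (CH_adj n) 3 c" "3 \<le> n" "even n"
  shows "3 * (n + 1) \<le> sum c (CH_verts n)"
proof -
  note f = proper_facts[OF assms(1,2)]
  define h where "h = c Hub"
  have sm: "i < n \<Longrightarrow> Suc i mod n < n" for i using assms(2) by simp
  have A: "(6 - h) * n \<le> 2 * (\<Sum>i<n. c (V i))"
  proof (rule cyc_lb0)
    show "\<forall>i<n. 6 - h \<le> c (V i) + c (V (Suc i mod n))"
    proof (intro allI impI)
      fix i assume i: "i < n"
      have "c (V i) \<in> {1..3}" "c (V (Suc i mod n)) \<in> {1..3}" "h \<in> {1..3}"
        "c (V i) \<noteq> c (V (Suc i mod n))" "h \<noteq> c (V i)" "h \<noteq> c (V (Suc i mod n))"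
        using f i sm[OF i] unfolding h_def by auto
      then show "6 - h \<le> c (V i) + c (V (Suc i mod n))" by auto
    qed
  qed (use assms in auto)
  have B: "3 * n \<le> 2 * (\<Sum>i<n. c (U i))"
  proof (rule cyc_lb0)
    show "\<forall>i<n. 3 \<le> c (U i) + c (U (Suc i mod n))"
    proof (intro allI impI)
      fix i assume i: "i < n"
      have "c (U i) \<in> {1..3}" "c (U (Suc i mod n)) \<in> {1..3}"
        "c (U i) \<noteq> c (U (Suc i mod n))"
        using f i sm[OF i] by auto
      then show "3 \<le> c (U i) + c (U (Suc i mod n))" by auto
    qed
  qed (use assms in auto)
  have "h = 1 \<or> h = 2 \<or> h = 3" using f(1) unfolding h_def by auto
  then show ?thesis unfolding sum_CH h_def[symmetric] using A B assms(2) by auto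
qed

lemma odd_bump: "odd (x::nat) \<Longrightarrow> x \<le> 2 * s \<Longrightarrow> x + 1 \<le> 2 * s"
  by (cases "x = 2 * s") auto

lemma tri8:
  assumes "x \<noteq> y" "y \<noteq> z" "z \<noteq> x"
    "x \<in> {1..4} \<and> x \<noteq> 2" "y \<in> {1..4} \<and> y \<noteq> 2" "z \<in> {1..4} \<and> z \<noteq> (2::nat)"
  shows "x + y + z = 8"
proof -
  have "x \<in> {1,3,4}" "y \<in> {1,3,4}" "z \<in> {1,3,4}" using assms(4-6) by auto
  then show ?thesis using assms(1-3) by auto
qed

lemma sum3: "(\<Sum>i<(3::nat). f i) = f 0 + f 1 + (f 2 :: nat)"
  by (simp add: numeral_3_eq_3 numeral_2_eq_2)

lemma exists_big:
  assumes "odd n" "3 \<le> n" "\<forall>i<n. f i \<noteq> f (Suc i mod n)"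
  shows "\<exists>j<n. f j \<noteq> a \<and> f j \<noteq> b"
  using odd_cycle_two[OF assms, of a b] by blast

lemma lb_odd:
  assumes "proper_colouring (CH_verts n) (CH_adj n) 4 c" "3 \<le> n" "odd n"
  shows "3 * n + 7 \<le> sum c (CH_verts n)"
proof -
  note f = proper_facts[OF assms(1,2)]
  define h where "h = c Hub"
  have sm: "i < n \<Longrightarrow> Suc i mod n < n" for i using assms(2) by simp
  have pm: "i < n \<Longrightarrow> (if i = 0 then n - 1 else i - 1) < n" for i by auto
  define fv where "fv i = c (V i)" for i
  define fu where "fu i = c (U i)" for i
  have fv: "\<forall>i<n. fv i \<in> {1..4} \<and> fv i \<noteq> h \<and> fv i \<noteq> fv (Suc i mod n)"
    using f unfolding fv_def h_def by auto
  have fu: "\<forall>i<n. fu i \<in> {1..4} \<and> fu i \<noteq> fu (Suc i mod n)"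
    using f unfolding fu_def by auto
  have fvs: "\<forall>i<n. fv i \<noteq> fv (Suc i mod n)" using fv by auto
  have fus: "\<forall>i<n. fu i \<noteq> fu (Suc i mod n)" using fu by auto
  have o1: "odd (3 * n + 2)" "odd (3 * n + 4)" "odd (5 * n + 2)" using assms(3) by simp_all
  obtain j where j: "j < n" "fu j \<noteq> 1" "fu j \<noteq> 2" using exists_big[OF assms(3,2) fus] by blast
  have "3 * n + 2 * 1 \<le> 2 * (\<Sum>i<n. fu i)"
  proof (rule cyc_lb2[OF _ _ j(1)])
    show "\<forall>i<n. 3 \<le> fu i + fu (Suc i mod n)"
    proof (intro allI impI)
      fix i assume i: "i < n"
      then show "3 \<le> fu i + fu (Suc i mod n)" using fu[rule_format, OF i] fu[rule_format, OF sm[OF i]] by auto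
    qed
    show "3 + 1 \<le> fu j + fu (Suc j mod n)" using fu[rule_format, OF j(1)] fu[rule_format, OF sm[OF j(1)]] j by auto
    show "3 + 1 \<le> fu (if j = 0 then n - 1 else j - 1) + fu j" using fu[rule_format, OF j(1)] fu[rule_format, OF pm[OF j(1)]] j by auto
  qed (use assms in auto)
  then have "3 * n + 2 \<le> 2 * (\<Sum>i<n. fu i)" by simp
  from odd_bump[OF o1(1) this] have U: "3 * n + 2 + 1 \<le> 2 * (\<Sum>i<n. fu i)" .
  have V: "3 * n + 11 \<le> 2 * h + 2 * (\<Sum>i<n. fv i)"
  proof -
    have "h = 1 \<or> h = 2 \<or> h = 3 \<or> h = 4" using f(1) unfolding h_def by auto
    then show ?thesis
    proof (elim disjE)
      assume h: "h = 4"
      obtain j where j: "j < n" "fv j \<noteq> 1" "fv j \<noteq> 2" using exists_big[OF assms(3,2) fvs] by blast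
      have "3 * n + 2 * 1 \<le> 2 * (\<Sum>i<n. fv i)"
      proof (rule cyc_lb2[OF _ _ j(1)])
        show "\<forall>i<n. 3 \<le> fv i + fv (Suc i mod n)"
        proof (intro allI impI)
          fix i assume i: "i < n"
          then show "3 \<le> fv i + fv (Suc i mod n)" using fv[rule_format, OF i] fv[rule_format, OF sm[OF i]] by auto
        qed
        show "3 + 1 \<le> fv j + fv (Suc j mod n)" using fv[rule_format, OF j(1)] fv[rule_format, OF sm[OF j(1)]] j by auto
        show "3 + 1 \<le> fv (if j = 0 then n - 1 else j - 1) + fv j" using fv[rule_format, OF j(1)] fv[rule_format, OF pm[OF j(1)]] j by auto
      qed (use assms in auto)
      then have "3 * n + 2 \<le> 2 * (\<Sum>i<n. fv i)" by simp
      from odd_bump[OF o1(1) this] have "3 * n + 2 + 1 \<le> 2 * (\<Sum>i<n. fv i)" .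
      then show ?thesis using h by linarith
    next
      assume h: "h = 3"
      obtain j where j: "j < n" "fv j \<noteq> 1" "fv j \<noteq> 2" using exists_big[OF assms(3,2) fvs] by blast
      have j4: "fv j = 4" using fv[rule_format, OF j(1)] j h by auto
      have "3 * n + 2 * 2 \<le> 2 * (\<Sum>i<n. fv i)"
      proof (rule cyc_lb2[OF _ _ j(1)])
        show "\<forall>i<n. 3 \<le> fv i + fv (Suc i mod n)"
        proof (intro allI impI)
          fix i assume i: "i < n"
          then show "3 \<le> fv i + fv (Suc i mod n)" using fv[rule_format, OF i] fv[rule_format, OF sm[OF i]] by auto
        qed
        show "3 + 2 \<le> fv j + fv (Suc j mod n)" using fv[rule_format, OF j(1)] fv[rule_format, OF sm[OF j(1)]] j4 by auto
        show "3 + 2 \<le> fv (if j = 0 then n - 1 else j - 1) + fv j" using fv[rule_format, OF j(1)] fv[rule_format, OF pm[OF j(1)]] j4 by auto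
      qed (use assms in auto)
      then have "3 * n + 4 \<le> 2 * (\<Sum>i<n. fv i)" by simp
      from odd_bump[OF o1(2) this] have "3 * n + 4 + 1 \<le> 2 * (\<Sum>i<n. fv i)" .
      then show ?thesis using h by linarith
    next
      assume h: "h = 1"
      obtain j where j: "j < n" "fv j \<noteq> 2" "fv j \<noteq> 3" using exists_big[OF assms(3,2) fvs] by blast
      have j4: "fv j = 4" using fv[rule_format, OF j(1)] j h by auto
      have "5 * n + 2 * 1 \<le> 2 * (\<Sum>i<n. fv i)"
      proof (rule cyc_lb2[OF _ _ j(1)])
        show "\<forall>i<n. 5 \<le> fv i + fv (Suc i mod n)"
        proof (intro allI impI)
          fix i assume i: "i < n"
          then show "5 \<le> fv i + fv (Suc i mod n)" using fv[rule_format, OF i] fv[rule_format, OF sm[OF i]] h by auto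
        qed
        show "5 + 1 \<le> fv j + fv (Suc j mod n)" using fv[rule_format, OF j(1)] fv[rule_format, OF sm[OF j(1)]] j4 h by auto
        show "5 + 1 \<le> fv (if j = 0 then n - 1 else j - 1) + fv j" using fv[rule_format, OF j(1)] fv[rule_format, OF pm[OF j(1)]] j4 h by auto
      qed (use assms in auto)
      then have "5 * n + 2 \<le> 2 * (\<Sum>i<n. fv i)" by simp
      from odd_bump[OF o1(3) this] have "5 * n + 2 + 1 \<le> 2 * (\<Sum>i<n. fv i)" .
      then show ?thesis using h assms(2) by linarith
    next
      assume h: "h = 2"
      show ?thesis
      proof (cases "n = 3")
        case True
        have e: "Suc 0 mod n = 1" "Suc 1 mod n = 2" "Suc 2 mod n = 0" unfolding True by simp_all
        have l: "0 < n" "1 < n" "2 < n" unfolding True by simp_all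
        have d: "fv 0 \<noteq> fv 1" "fv 1 \<noteq> fv 2" "fv 2 \<noteq> fv 0"
          using fvs[rule_format, OF l(1)] fvs[rule_format, OF l(2)] fvs[rule_format, OF l(3)]
          unfolding e by simp_all
        have m: "fv 0 \<in> {1..4} \<and> fv 0 \<noteq> 2" "fv 1 \<in> {1..4} \<and> fv 1 \<noteq> 2" "fv 2 \<in> {1..4} \<and> fv 2 \<noteq> 2"
          using fv[rule_format, of 0] fv[rule_format, of 1] fv[rule_format, of 2] unfolding True h
          by simp_all
        have "fv 0 + fv 1 + fv 2 = 8" by (rule tri8[OF d m])
        moreover have "(\<Sum>i<n. fv i) = fv 0 + fv 1 + fv 2"
          unfolding True by (rule sum3)
        ultimately show ?thesis unfolding True h by simp
      next
        case False
        then have n5: "5 \<le> n" using assms(2,3) by (cases "n = 4") auto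
        obtain j where j: "j < n" "fv j \<noteq> 1" "fv j \<noteq> 3" using exists_big[OF assms(3,2) fvs] by blast
        have j4: "fv j = 4" using fv[rule_format, OF j(1)] j h by auto
        have "4 * n + 2 * 1 \<le> 2 * (\<Sum>i<n. fv i)"
        proof (rule cyc_lb2[OF _ _ j(1)])
          show "\<forall>i<n. 4 \<le> fv i + fv (Suc i mod n)"
          proof (intro allI impI)
            fix i assume i: "i < n"
            then show "4 \<le> fv i + fv (Suc i mod n)" using fv[rule_format, OF i] fv[rule_format, OF sm[OF i]] h by auto
          qed
          show "4 + 1 \<le> fv j + fv (Suc j mod n)" using fv[rule_format, OF j(1)] fv[rule_format, OF sm[OF j(1)]] j4 h by auto
          show "4 + 1 \<le> fv (if j = 0 then n - 1 else j - 1) + fv j" using fv[rule_format, OF j(1)] fv[rule_format, OF pm[OF j(1)]] j4 h by auto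
        qed (use assms in auto)
        then show ?thesis using h n5 by linarith
      qed
    qed
  qed
  show ?thesis unfolding sum_CH using U V unfolding fu_def fv_def h_def by linarith
qed


theorem theorem2p9:
  fixes n :: nat
  assumes "n \<ge> 3"
  shows "chi_chromatic_sum (CH_verts n) (CH_adj n) = (if even n then 3 * (n + 1) else 3 * n + 7)"
proof (cases "even n")
  case True
  have chi: "chromatic_number (CH_verts n) (CH_adj n) = 3"
    unfolding chromatic_number_def
    by (rule Least_equality) (use colE_proper[OF assms True] tri_lb[OF _ assms] in blast)+
  have "chi_chromatic_sum (CH_verts n) (CH_adj n) = 3 * (n + 1)"
    unfolding chi_chromatic_sum_def chi
    by (rule Least_equality)
       (use colE_proper[OF assms True] colE_sum[OF True] lb_even[OF _ assms True] in auto)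
  then show ?thesis using True by simp
next
  case False
  have chi: "chromatic_number (CH_verts n) (CH_adj n) = 4"
    unfolding chromatic_number_def
    by (rule Least_equality) (use colO_proper[OF assms False] odd_lb[OF _ assms False] in blast)+
  have "chi_chromatic_sum (CH_verts n) (CH_adj n) = 3 * n + 7"
    unfolding chi_chromatic_sum_def chi
    by (rule Least_equality)
       (use colO_proper[OF assms False] colO_sum[OF False] lb_odd[OF _ assms False] in auto)
  then show ?thesis using False by simp
qed

end
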